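(* Let $\mathcal{H}$ be a complex Hilbert space and $T\in\mathbb{B}(\mathcal{H})$. Then $$w(T) \leq \frac{\sqrt{2}}{2}\Omega(T) \leq \frac{\sqrt{2}}{2}\min\left\{\sqrt{\|TT^* + T^*T\|},\ \sqrt{\|T\|^2 + w(T^2)}\right\}.$$
   Context: $\mathbb{B}(\mathcal{H})$ is the algebra of bounded linear operators on $\mathcal{H}$, $\|\cdot\|$ the usual operator norm, and $w(T)=\sup\{|\langle Tx,x\rangle|:\|x\|=1\}$ the numerical radius. Dragomir's norm is $\Omega(T)=\sup\{\|\zeta T+\eta T^*\|:\ \zeta,\eta\in\mathbb{C},\ |\zeta|^2+|\eta|^2\le 1\}$. *)

theory Defs
  imports "HOL-Analysis.Analysis"
begin

text \<open>The distribution has no complex vector spaces, so we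
introduce them as a type class: a complete real inner-product space (whose norm and
real inner product are the ones of the library) which carries a complex scalar
multiplication extending the real one, and a complex inner product (linear in the
first argument, conjugate symmetric) whose real part is the real inner product.\<close>

class complex_hilbert = real_inner + complete_space +
  fixes scaleC :: "complex \<Rightarrow> 'a \<Rightarrow> 'a" (infixr \<open>*\<^sub>C\<close> 75)
  fixes cinner :: "'a \<Rightarrow> 'a \<Rightarrow> complex"
  assumes scaleC_add_right: "a *\<^sub>C (x + y) = a *\<^sub>C x + a *\<^sub>C y"
    and scaleC_add_left: "(a + b) *\<^sub>C x = a *\<^sub>C x + b *\<^sub>C x"
    and scaleC_scaleC: "a *\<^sub>C (b *\<^sub>C x) = (a * b) *\<^sub>C x"
    and scaleC_one: "1 *\<^sub>C x = x"
    and scaleR_scaleC: "r *\<^sub>R x = complex_of_real r *\<^sub>C x"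
    and cinner_add_left: "cinner (x + y) z = cinner x z + cinner y z"
    and cinner_scaleC_left: "cinner (a *\<^sub>C x) y = a * cinner x y"
    and cinner_commute: "cinner x y = cnj (cinner y x)"
    and inner_cinner: "inner x y = Re (cinner x y)"

definition cblinear :: "('a::complex_hilbert \<Rightarrow> 'a) \<Rightarrow> bool" where
  "cblinear T \<longleftrightarrow> bounded_linear T \<and> (\<forall>a x. T (a *\<^sub>C x) = a *\<^sub>C T x)"

definition adj :: "('a::complex_hilbert \<Rightarrow> 'a) \<Rightarrow> 'a \<Rightarrow> 'a" where
  "adj T = (THE S. \<forall>x y. cinner (T x) y = cinner x (S y))"

text \<open>Numerical radius w(T) = sup{|<Tx,x>| : ||x|| = 1} (with sup of the empty set
taken as 0, relevant only for the zero space).\<close>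
definition numrad :: "('a::complex_hilbert \<Rightarrow> 'a) \<Rightarrow> real" where
  "numrad T = Sup ({cmod (cinner (T x) x) | x. norm x = 1} \<union> {0})"

definition dragomir :: "('a::complex_hilbert \<Rightarrow> 'a) \<Rightarrow> real" where
  "dragomir T = (SUP p \<in> {(\<zeta>, \<eta>). (cmod \<zeta>)\<^sup>2 + (cmod \<eta>)\<^sup>2 \<le> 1}.
      onorm (\<lambda>x. fst p *\<^sub>C T x + snd p *\<^sub>C adj T x))"

end

theory Submission
  imports Defs
begin


lemma scaleC_zero_left [simp]: "(0::complex) *\<^sub>C (x::'a::complex_hilbert) = 0"
  using scaleR_scaleC[of 0 x] by simp

lemma scaleC_minus1: "(-1::complex) *\<^sub>C (x::'a::complex_hilbert) = - x"
  using scaleR_scaleC[of "-1" x] by simp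

lemma scaleC_minus_left: "(- a) *\<^sub>C (x::'a::complex_hilbert) = - (a *\<^sub>C x)"
proof -
  have "(- a) *\<^sub>C x = (-1) *\<^sub>C (a *\<^sub>C x)" by (simp only: scaleC_scaleC mult_minus1)
  then show ?thesis by (simp only: scaleC_minus1)
qed

lemma scaleC_minus_right: "a *\<^sub>C (- x::'a::complex_hilbert) = - (a *\<^sub>C x)"
proof -
  have "a *\<^sub>C (- x) = a *\<^sub>C ((-1) *\<^sub>C x)" by (simp only: scaleC_minus1)
  also have "\<dots> = (-1) *\<^sub>C (a *\<^sub>C x)" by (simp only: scaleC_scaleC mult.commute)
  also have "\<dots> = - (a *\<^sub>C x)" by (simp only: scaleC_minus1)
  finally show ?thesis .
qed

lemma scaleC_diff_right: "a *\<^sub>C (x - y::'a::complex_hilbert) = a *\<^sub>C x - a *\<^sub>C y"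
  by (simp only: diff_conv_add_uminus scaleC_add_right scaleC_minus_right)

lemma scaleC_zero_right [simp]: "a *\<^sub>C (0::'a::complex_hilbert) = 0"
  using scaleC_diff_right[of a 0 0] by simp

lemma scaleR_scaleC_commute: "r *\<^sub>R (a *\<^sub>C (x::'a::complex_hilbert)) = a *\<^sub>C (r *\<^sub>R x)"
  by (simp add: scaleR_scaleC scaleC_scaleC mult.commute)

lemma cinner_add_right: "cinner (x::'a::complex_hilbert) (y + z) = cinner x y + cinner x z"
  by (simp only: cinner_commute[of x] cinner_add_left complex_cnj_add)

lemma cinner_scaleC_right: "cinner (x::'a::complex_hilbert) (a *\<^sub>C y) = cnj a * cinner x y"
  by (simp only: cinner_commute[of x] cinner_scaleC_left complex_cnj_mult)

lemma cinner_minus_left: "cinner (- x::'a::complex_hilbert) y = - cinner x y"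
  using cinner_scaleC_left[of "-1" x y] by (simp only: scaleC_minus1 mult_minus1)

lemma cinner_minus_right: "cinner (x::'a::complex_hilbert) (- y) = - cinner x y"
  by (simp only: cinner_commute[of x] cinner_minus_left complex_cnj_minus)

lemma cinner_diff_left: "cinner (x - y::'a::complex_hilbert) z = cinner x z - cinner y z"
  by (simp only: diff_conv_add_uminus cinner_add_left cinner_minus_left)

lemma cinner_diff_right: "cinner (x::'a::complex_hilbert) (y - z) = cinner x y - cinner x z"
  by (simp only: diff_conv_add_uminus cinner_add_right cinner_minus_right)

lemma cinner_self: "cinner (x::'a::complex_hilbert) x = complex_of_real ((norm x)\<^sup>2)"
proof (rule complex_eqI)
  have h: "cinner x x = cnj (cinner x x)" by (rule cinner_commute)
  have "Im (cinner x x) = Im (cnj (cinner x x))" by (rule arg_cong[OF h])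
  also have "\<dots> = - Im (cinner x x)" by simp
  finally have "Im (cinner x x) = - Im (cinner x x)" .
  then show "Im (cinner x x) = Im (complex_of_real ((norm x)\<^sup>2))" by simp
  show "Re (cinner x x) = Re (complex_of_real ((norm x)\<^sup>2))"
    by (simp add: inner_cinner[symmetric] power2_norm_eq_inner)
qed

lemma norm_scaleC: "norm (a *\<^sub>C (x::'a::complex_hilbert)) = cmod a * norm x"
proof -
  have "(norm (a *\<^sub>C x))\<^sup>2 = Re (cinner (a *\<^sub>C x) (a *\<^sub>C x))"
    by (simp only: cinner_self Re_complex_of_real)
  also have "\<dots> = Re (a * cnj a * complex_of_real ((norm x)\<^sup>2))"
    unfolding cinner_scaleC_left cinner_scaleC_right by (simp only: cinner_self mult.assoc mult.left_commute)
  also have "\<dots> = (cmod a)\<^sup>2 * (norm x)\<^sup>2"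
    by (simp only: complex_norm_square[symmetric] of_real_mult[symmetric] Re_complex_of_real)
  also have "\<dots> = (cmod a * norm x)\<^sup>2" by (simp add: power_mult_distrib)
  finally show ?thesis by (simp add: power2_eq_iff_nonneg)
qed

lemma cinner_cauchy_schwarz: "cmod (cinner (x::'a::complex_hilbert) y) \<le> norm x * norm y"
proof (cases "cinner x y = 0")
  case True then show ?thesis by simp
next
  case False
  define c where "c = cinner x y"
  define u where "u = cnj c / complex_of_real (cmod c)"
  have cu: "cmod u = 1" using False by (simp add: u_def c_def norm_divide)
  have cc: "cnj c * c = complex_of_real (cmod c) * complex_of_real (cmod c)"
    using complex_norm_square[of c] by (simp add: mult.commute power2_eq_square)
  have "u * c = cnj c * c / complex_of_real (cmod c)" by (simp add: u_def)
  also have "\<dots> = complex_of_real (cmod c)"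
  proof -
    have c0: "complex_of_real (cmod c) \<noteq> 0" using False c_def by simp
    show ?thesis unfolding cc using c0 by simp
  qed
  finally have "u * c = complex_of_real (cmod c)" .
  then have "cmod c = Re (cinner (u *\<^sub>C x) y)" by (simp add: cinner_scaleC_left c_def)
  also have "\<dots> = inner (u *\<^sub>C x) y" by (rule inner_cinner[symmetric])
  also have "\<dots> \<le> norm (u *\<^sub>C x) * norm y" by (rule norm_cauchy_schwarz)
  also have "\<dots> = norm x * norm y" by (simp only: norm_scaleC cu mult_1_left)
  finally show ?thesis by (simp only: c_def)
qed

lemma cinner_ext: "(\<And>x. cinner x u = cinner x v) \<Longrightarrow> (u::'a::complex_hilbert) = v"
proof -
  assume h: "\<And>x. cinner x u = cinner x v"
  have "cinner (u - v) (u - v) = 0" using h[of "u - v"] by (simp add: cinner_diff_right)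
  then show "u = v" by (simp add: cinner_self)
qed

lemma Im_cinner: "Im (cinner (x::'a::complex_hilbert) y) = inner ((- \<i>) *\<^sub>C x) y"
  by (simp only: inner_cinner cinner_scaleC_left) simp

lemma bounded_linear_scaleC: "bounded_linear (\<lambda>x::'a::complex_hilbert. a *\<^sub>C x)"
proof (rule bounded_linear_intro[where K="cmod a"])
  show "a *\<^sub>C (x + y) = a *\<^sub>C x + a *\<^sub>C y" for x y :: 'a by (rule scaleC_add_right)
  show "a *\<^sub>C (r *\<^sub>R x) = r *\<^sub>R (a *\<^sub>C x)" for r and x :: 'a by (rule scaleR_scaleC_commute[symmetric])
  show "norm (a *\<^sub>C x) \<le> norm x * cmod a" for x :: 'a by (simp only: norm_scaleC mult.commute order_refl)
qed



lemma parallelogram_sq: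
  fixes a b :: "'a::real_inner"
  shows "(norm (a - b))\<^sup>2 + (norm (a + b))\<^sup>2 = 2 * (norm a)\<^sup>2 + 2 * (norm b)\<^sup>2"
  by (simp add: power2_norm_eq_inner inner_simps inner_commute)

lemma riesz_real:
  fixes f :: "'a::{real_inner,complete_space} \<Rightarrow> real"
  assumes bl: "bounded_linear f"
  shows "\<exists>w. \<forall>x. f x = inner x w"
proof (cases "\<forall>x. f x = 0")
  case True then show ?thesis by (intro exI[of _ 0]) simp
next
  case False
  interpret f: bounded_linear f by fact
  obtain x0 where x0: "f x0 \<noteq> 0" using False by blast
  define A where "A = {x. f x = 1}"
  have x1A: "x0 /\<^sub>R f x0 \<in> A" using x0 by (simp add: A_def f.scaleR)
  define d where "d = Inf (norm ` A)"
  have bdd: "bdd_below (norm ` A)" by (rule bdd_belowI[of _ 0]) auto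
  have ne: "norm ` A \<noteq> {}" using x1A by blast
  have dle: "d \<le> norm x" if "x \<in> A" for x
    unfolding d_def using that bdd by (intro cInf_lower) auto
  have d0: "0 \<le> d" using dle[OF x1A] unfolding d_def
    using ne by (intro cInf_greatest) auto
  define e where "e = (\<lambda>n::nat. inverse (real (Suc n)))"
  have epos: "e n > 0" for n by (simp add: e_def)
  have "\<exists>x. x \<in> A \<and> (norm x)\<^sup>2 < d\<^sup>2 + e n" for n
  proof -
    have "d < sqrt (d\<^sup>2 + e n)"
      using epos[of n] by (intro real_less_rsqrt) simp
    then obtain x where "x \<in> A" "norm x < sqrt (d\<^sup>2 + e n)"
      using cInf_less_iff[OF ne bdd] unfolding d_def by auto
    then have "(norm x)\<^sup>2 < d\<^sup>2 + e n"
      by (metis norm_ge_zero real_sqrt_less_iff real_sqrt_abs abs_norm_cancel power2_eq_square real_sqrt_mult_self)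
    with \<open>x \<in> A\<close> show ?thesis by blast
  qed
  then obtain X where X: "\<And>n. X n \<in> A" "\<And>n. (norm (X n))\<^sup>2 < d\<^sup>2 + e n"
    by metis
  have midA: "(1/2) *\<^sub>R (X m + X n) \<in> A" for m n
    using X(1)[of m] X(1)[of n] by (simp add: A_def f.scaleR f.add)
  have diff: "(norm (X m - X n))\<^sup>2 \<le> 2 * e m + 2 * e n" for m n
  proof -
    have "d \<le> norm ((1/2) *\<^sub>R (X m + X n))" by (rule dle[OF midA])
    then have "2 * d \<le> norm (X m + X n)" by simp
    then have "(2 * d)\<^sup>2 \<le> (norm (X m + X n))\<^sup>2"
      using d0 by (intro power_mono) auto
    then show ?thesis using parallelogram_sq[of "X m" "X n"] X(2)[of m] X(2)[of n]
      by (simp add: power_mult_distrib)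
  qed
  have "Cauchy X"
  proof (rule metric_CauchyI)
    fix r :: real assume r: "r > 0"
    obtain M where M: "4 / r\<^sup>2 < real M" using reals_Archimedean2 by blast
    have "dist (X m) (X n) < r" if "m \<ge> M" "n \<ge> M" for m n
    proof -
      have em: "e m \<le> e M" "e n \<le> e M" using that
        by (auto simp: e_def intro!: le_imp_inverse_le)
      have "4 / r\<^sup>2 < real (Suc M)" using M by simp
      then have "4 < real (Suc M) * r\<^sup>2" using r by (simp add: divide_less_eq)
      then have "4 * e M < r\<^sup>2" unfolding e_def
        by (simp add: field_simps)
      then have "(norm (X m - X n))\<^sup>2 < r\<^sup>2" using diff[of m n] em by linarith
      then show ?thesis using r by (simp add: dist_norm power_less_imp_less_base)
    qed
    then show "\<exists>M. \<forall>m\<ge>M. \<forall>n\<ge>M. dist (X m) (X n) < r" by blast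
  qed
  then obtain z where z: "X \<longlonglongrightarrow> z" using Cauchy_convergent_iff convergent_def by blast
  have "(\<lambda>n. f (X n)) \<longlonglongrightarrow> f z" using f.tendsto[OF z] .
  moreover have "(\<lambda>n. f (X n)) = (\<lambda>n. 1)" using X(1) by (auto simp: A_def)
  ultimately have fz: "f z = 1" using LIMSEQ_unique tendsto_const by metis
  have "norm z \<le> d"
  proof (rule tendsto_le[OF _ _ tendsto_norm[OF z]])
    show "sequentially \<noteq> bot" by simp
    have "(\<lambda>n. d\<^sup>2 + e n) \<longlonglongrightarrow> d\<^sup>2 + 0" unfolding e_def
      by (intro tendsto_add tendsto_const LIMSEQ_inverse_real_of_nat)
    then have "(\<lambda>n. sqrt (d\<^sup>2 + e n)) \<longlonglongrightarrow> sqrt (d\<^sup>2)"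
      by (intro tendsto_real_sqrt) simp
    then show "(\<lambda>n. sqrt (d\<^sup>2 + e n)) \<longlonglongrightarrow> d" using d0 by simp
    show "\<forall>\<^sub>F n in sequentially. norm (X n) \<le> sqrt (d\<^sup>2 + e n)"
      using X(2) by (intro always_eventually allI real_le_rsqrt) (auto intro: less_imp_le)
  qed
  have orth: "inner z k = 0" if "f k = 0" for k
  proof -
    define a where "a = inner z k"
    define b where "b = (norm k)\<^sup>2"
    have b0: "b \<ge> 0" by (simp add: b_def)
    define t where "t = - a / (b + 1)"
    have "z + t *\<^sub>R k \<in> A" using fz that by (simp add: A_def f.add f.scaleR)
    then have "norm z \<le> norm (z + t *\<^sub>R k)" using dle \<open>norm z \<le> d\<close> by force
    then have "(norm z)\<^sup>2 \<le> (norm (z + t *\<^sub>R k))\<^sup>2" by (simp add: power_mono)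
    also have "\<dots> = (norm z)\<^sup>2 + 2 * t * a + t\<^sup>2 * b"
      unfolding a_def b_def power2_norm_eq_inner
      by (simp add: inner_simps inner_commute power2_eq_square algebra_simps)
    finally have "0 \<le> 2 * t * a + t\<^sup>2 * b" by simp
    then have "0 \<le> (2 * t * a + t\<^sup>2 * b) * (b + 1)\<^sup>2" using b0 by simp
    also have "\<dots> = 2 * a * (t * (b + 1)) * (b + 1) + (t * (b + 1))\<^sup>2 * b"
      by (simp add: power2_eq_square algebra_simps)
    also have "t * (b + 1) = - a" using b0 unfolding t_def by simp
    also have "2 * a * (- a) * (b + 1) + (- a)\<^sup>2 * b = - a\<^sup>2 * (b + 2)"
      by (simp add: power2_eq_square algebra_simps)
    finally have "a\<^sup>2 * (b + 2) \<le> 0" by simp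
    then have "a\<^sup>2 \<le> 0" using b0 by (simp add: mult_le_0_iff)
    then show ?thesis unfolding a_def by simp
  qed
  have zne: "z \<noteq> 0" using fz f.zero by auto
  show ?thesis
  proof (intro exI allI)
    fix x
    have "inner z (x - f x *\<^sub>R z) = 0" using fz by (intro orth) (simp add: f.diff f.scaleR)
    then have "inner z x = f x * inner z z" by (simp add: inner_simps)
    then show "f x = inner x (z /\<^sub>R (norm z)\<^sup>2)"
      using zne by (simp add: inner_commute power2_norm_eq_inner)
  qed
qed



lemma cblinear_bl: "cblinear T \<Longrightarrow> bounded_linear T"
  by (simp add: cblinear_def)

lemma cblinear_scaleC: "cblinear T \<Longrightarrow> T (a *\<^sub>C x) = a *\<^sub>C T x"
  by (simp add: cblinear_def)

lemma adj_exists: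
  fixes T :: "'a::complex_hilbert \<Rightarrow> 'a"
  assumes T: "cblinear T"
  shows "\<exists>S. \<forall>x y. cinner (T x) y = cinner x (S y)"
proof -
  have "\<exists>z. \<forall>x. inner (T x) y = inner x z" for y
  proof (rule riesz_real)
    show "bounded_linear (\<lambda>x. inner (T x) y)"
      using bounded_linear_compose[OF bounded_linear_inner_left cblinear_bl[OF T]] .
  qed
  from choice[OF allI[OF this]] obtain S where S0: "\<forall>y. \<forall>x. inner (T x) y = inner x (S y)" ..
  have S: "inner (T x) y = inner x (S y)" for x y using S0 by blast
  have "cinner (T x) y = cinner x (S y)" for x y
  proof (rule complex_eqI)
    show "Re (cinner (T x) y) = Re (cinner x (S y))"
      using S[of x y] by (simp only: inner_cinner)
    have "Im (cinner (T x) y) = inner ((- \<i>) *\<^sub>C T x) y" by (rule Im_cinner)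
    also have "\<dots> = inner (T ((- \<i>) *\<^sub>C x)) y" by (simp only: cblinear_scaleC[OF T])
    also have "\<dots> = inner ((- \<i>) *\<^sub>C x) (S y)" by (rule S)
    also have "\<dots> = Im (cinner x (S y))" by (rule Im_cinner[symmetric])
    finally show "Im (cinner (T x) y) = Im (cinner x (S y))" .
  qed
  then show ?thesis by blast
qed

lemma adj_prop:
  fixes T :: "'a::complex_hilbert \<Rightarrow> 'a"
  assumes T: "cblinear T"
  shows "cinner (T x) y = cinner x (adj T y)"
proof -
  obtain S where S: "\<forall>x y. cinner (T x) y = cinner x (S y)" using adj_exists[OF T] by blast
  have "\<forall>x y. cinner (T x) y = cinner x (adj T y)"
    unfolding adj_def
  proof (rule theI[of _ S])
    show "\<forall>x y. cinner (T x) y = cinner x (S y)" by (rule S)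
    fix S' assume S': "\<forall>x y. cinner (T x) y = cinner x (S' y)"
    show "S' = S"
    proof
      fix y show "S' y = S y"
      proof (rule cinner_ext)
        fix x show "cinner x (S' y) = cinner x (S y)"
          using S[rule_format, of x y] S'[rule_format, of x y] by simp
      qed
    qed
  qed
  then show ?thesis by blast
qed

lemma adj_prop2:
  fixes T :: "'a::complex_hilbert \<Rightarrow> 'a"
  assumes T: "cblinear T"
  shows "cinner (adj T y) x = cinner y (T x)"
  by (simp only: cinner_commute[of "adj T y" x] adj_prop[OF T, symmetric] cinner_commute[of y "T x"])

lemma adj_norm:
  fixes T :: "'a::complex_hilbert \<Rightarrow> 'a"
  assumes T: "cblinear T"
  shows "norm (adj T y) \<le> onorm T * norm y"
proof -
  let ?z = "adj T y"
  have "(norm ?z)\<^sup>2 = Re (cinner ?z ?z)" by (simp only: cinner_self Re_complex_of_real)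
  also have "\<dots> = Re (cinner (T ?z) y)" by (simp only: adj_prop[OF T])
  also have "\<dots> \<le> cmod (cinner (T ?z) y)" by (rule complex_Re_le_cmod)
  also have "\<dots> \<le> norm (T ?z) * norm y" by (rule cinner_cauchy_schwarz)
  also have "\<dots> \<le> onorm T * norm ?z * norm y"
    by (intro mult_right_mono onorm cblinear_bl[OF T]) simp
  finally have h: "norm ?z * norm ?z \<le> (onorm T * norm y) * norm ?z"
    by (simp add: power2_eq_square algebra_simps)
  show ?thesis
  proof (cases "norm ?z = 0")
    case True then show ?thesis
      using onorm_pos_le[OF cblinear_bl[OF T]] by simp
  next
    case False then show ?thesis using h by (simp add: mult_le_cancel_right)
  qed
qed

lemma adj_bl:
  fixes T :: "'a::complex_hilbert \<Rightarrow> 'a"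
  assumes T: "cblinear T"
  shows "bounded_linear (adj T)"
proof (rule bounded_linear_intro[where K="onorm T"])
  show "adj T (x + y) = adj T x + adj T y" for x y
    by (rule cinner_ext) (simp only: adj_prop[OF T, symmetric] cinner_add_right)
  show "adj T (r *\<^sub>R x) = r *\<^sub>R adj T x" for r x
    by (rule cinner_ext) (simp only: adj_prop[OF T, symmetric] scaleR_scaleC cinner_scaleC_right)
  show "norm (adj T x) \<le> norm x * onorm T" for x
    using adj_norm[OF T, of x] by (simp add: mult.commute)
qed



lemma numrad_bdd:
  fixes R :: "'a::complex_hilbert \<Rightarrow> 'a"
  assumes R: "bounded_linear R"
  shows "bdd_above ({cmod (cinner (R x) x) | x. norm x = 1} \<union> {0})"
proof (rule bdd_aboveI[where M="onorm R"])
  fix t assume "t \<in> {cmod (cinner (R x) x) | x. norm x = 1} \<union> {0}"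
  then show "t \<le> onorm R"
  proof
    assume "t \<in> {0}" then show ?thesis using onorm_pos_le[OF R] by simp
  next
    assume "t \<in> {cmod (cinner (R x) x) | x. norm x = 1}"
    then obtain x where x: "norm x = 1" "t = cmod (cinner (R x) x)" by blast
    have "t \<le> norm (R x) * norm x" unfolding x(2) by (rule cinner_cauchy_schwarz)
    also have "\<dots> \<le> onorm R * norm x * norm x"
      by (intro mult_right_mono onorm[OF R]) simp
    finally show ?thesis using x(1) by simp
  qed
qed

lemma numrad_nonneg:
  fixes R :: "'a::complex_hilbert \<Rightarrow> 'a"
  assumes R: "bounded_linear R"
  shows "0 \<le> numrad R"
  unfolding numrad_def by (rule cSup_upper[OF _ numrad_bdd[OF R]]) simp

lemma numrad_le:
  fixes R :: "'a::complex_hilbert \<Rightarrow> 'a"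
  assumes R: "bounded_linear R"
  shows "cmod (cinner (R x) x) \<le> numrad R * (norm x)\<^sup>2"
proof (cases "x = 0")
  case True
  then show ?thesis using linear_simps(3)[OF R] by (simp add: cinner_self)
next
  case False
  interpret R: bounded_linear R by fact
  define n where "n = norm x"
  have n0: "n > 0" using False by (simp add: n_def)
  define y where "y = (1 / n) *\<^sub>R x"
  have ny: "norm y = 1" using n0 by (simp add: y_def n_def)
  have "cinner (R y) y = complex_of_real (1/n) * complex_of_real (1/n) * cinner (R x) x"
    unfolding y_def R.scaleR by (simp add: scaleR_scaleC cinner_scaleC_left cinner_scaleC_right)
  then have "cmod (cinner (R y) y) = cmod (cinner (R x) x) / n\<^sup>2"
    using n0 by (simp add: norm_mult norm_divide power2_eq_square)
  moreover have "cmod (cinner (R y) y) \<le> numrad R"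
    unfolding numrad_def using ny by (intro cSup_upper[OF _ numrad_bdd[OF R]]) blast
  ultimately have "cmod (cinner (R x) x) / n\<^sup>2 \<le> numrad R" by simp
  then show ?thesis using n0 by (simp add: n_def divide_le_eq)
qed

lemma bl_combo:
  fixes T :: "'a::complex_hilbert \<Rightarrow> 'a"
  assumes T: "cblinear T"
  shows "bounded_linear (\<lambda>x. z *\<^sub>C T x + w *\<^sub>C adj T x)"
proof -
  have 1: "bounded_linear (\<lambda>x. z *\<^sub>C T x)"
    by (rule bounded_linear_compose[OF bounded_linear_scaleC cblinear_bl[OF T]])
  have 2: "bounded_linear (\<lambda>x. w *\<^sub>C adj T x)"
    by (rule bounded_linear_compose[OF bounded_linear_scaleC adj_bl[OF T]])
  show ?thesis by (rule bounded_linear_add[OF 1 2])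
qed

lemma key1:
  fixes T :: "'a::complex_hilbert \<Rightarrow> 'a"
  assumes T: "cblinear T" and zw: "(cmod z)\<^sup>2 + (cmod w)\<^sup>2 \<le> 1"
  shows "(norm (z *\<^sub>C T x + w *\<^sub>C adj T x))\<^sup>2
           \<le> onorm (\<lambda>x. T (adj T x) + adj T (T x)) * (norm x)\<^sup>2"
proof -
  define p where "p = cmod z"
  define q where "q = cmod w"
  define a where "a = norm (T x)"
  define b where "b = norm (adj T x)"
  have pq: "p \<ge> 0" "q \<ge> 0" "a \<ge> 0" "b \<ge> 0" by (simp_all add: p_def q_def a_def b_def)
  have "norm (z *\<^sub>C T x + w *\<^sub>C adj T x) \<le> norm (z *\<^sub>C T x) + norm (w *\<^sub>C adj T x)"
    by (rule norm_triangle_ineq)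
  also have "\<dots> = p * a + q * b" by (simp add: norm_scaleC p_def q_def a_def b_def)
  finally have "(norm (z *\<^sub>C T x + w *\<^sub>C adj T x))\<^sup>2 \<le> (p * a + q * b)\<^sup>2"
    by (intro power_mono) simp_all
  also have "\<dots> \<le> (p\<^sup>2 + q\<^sup>2) * (a\<^sup>2 + b\<^sup>2)"
  proof -
    have "(p\<^sup>2 + q\<^sup>2) * (a\<^sup>2 + b\<^sup>2) - (p * a + q * b)\<^sup>2 = (p * b - q * a)\<^sup>2"
      by (simp add: power2_eq_square algebra_simps)
    then show ?thesis by (metis diff_ge_0_iff_ge zero_le_power2)
  qed
  also have "\<dots> \<le> 1 * (a\<^sup>2 + b\<^sup>2)"
    using zw by (intro mult_right_mono) (simp_all add: p_def q_def)
  also have "\<dots> = Re (cinner (T (adj T x) + adj T (T x)) x)"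
  proof -
    have "a\<^sup>2 = Re (cinner (adj T (T x)) x)"
      by (simp only: a_def adj_prop2[OF T] cinner_self Re_complex_of_real)
    moreover have "b\<^sup>2 = Re (cinner (T (adj T x)) x)"
      by (simp only: b_def adj_prop[OF T] cinner_self Re_complex_of_real)
    ultimately show ?thesis by (simp add: cinner_add_left)
  qed
  also have "\<dots> \<le> cmod (cinner (T (adj T x) + adj T (T x)) x)" by (rule complex_Re_le_cmod)
  also have "\<dots> \<le> norm (T (adj T x) + adj T (T x)) * norm x" by (rule cinner_cauchy_schwarz)
  also have "\<dots> \<le> onorm (\<lambda>x. T (adj T x) + adj T (T x)) * norm x * norm x"
  proof -
    have 1: "bounded_linear (\<lambda>x. T (adj T x))"
      by (rule bounded_linear_compose[OF cblinear_bl[OF T] adj_bl[OF T]])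
    have 2: "bounded_linear (\<lambda>x. adj T (T x))"
      by (rule bounded_linear_compose[OF adj_bl[OF T] cblinear_bl[OF T]])
    have "bounded_linear (\<lambda>x. T (adj T x) + adj T (T x))"
      by (rule bounded_linear_add[OF 1 2])
    from mult_right_mono[OF onorm[OF this] norm_ge_zero] show ?thesis .
  qed
  finally show ?thesis by (simp add: power2_eq_square mult.assoc)
qed

lemma key2:
  fixes T :: "'a::complex_hilbert \<Rightarrow> 'a"
  assumes T: "cblinear T" and zw: "(cmod z)\<^sup>2 + (cmod w)\<^sup>2 \<le> 1"
  shows "(norm (z *\<^sub>C T x + w *\<^sub>C adj T x))\<^sup>2
           \<le> ((onorm T)\<^sup>2 + numrad (T \<circ> T)) * (norm x)\<^sup>2"
proof -
  define p where "p = cmod z"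
  define q where "q = cmod w"
  define N where "N = onorm T"
  define n where "n = norm x"
  define W where "W = numrad (T \<circ> T)"
  define K where "K = N * n"
  define u where "u = z *\<^sub>C T x"
  define v where "v = w *\<^sub>C adj T x"
  have blT: "bounded_linear T" by (rule cblinear_bl[OF T])
  have blTT: "bounded_linear (T \<circ> T)" unfolding comp_def
    by (rule bounded_linear_compose[OF blT blT])
  have pq: "p \<ge> 0" "q \<ge> 0" "n \<ge> 0" "N \<ge> 0" "W \<ge> 0"
    using onorm_pos_le[OF blT] numrad_nonneg[OF blTT]
    by (simp_all add: p_def q_def n_def N_def W_def)
  have K0: "K \<ge> 0" using pq by (simp add: K_def)
  have a: "norm (T x) \<le> K" using onorm[OF blT] by (simp add: K_def N_def n_def)
  have b: "norm (adj T x) \<le> K" using adj_norm[OF T] by (simp add: K_def N_def n_def)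
  have nu: "(norm u)\<^sup>2 \<le> p\<^sup>2 * K\<^sup>2"
    unfolding u_def norm_scaleC power_mult_distrib p_def
    by (intro mult_left_mono power_mono a) simp_all
  have nv: "(norm v)\<^sup>2 \<le> q\<^sup>2 * K\<^sup>2"
    unfolding v_def norm_scaleC power_mult_distrib q_def
    by (intro mult_left_mono power_mono b) simp_all
  have "inner u v = Re (cinner u v)" by (rule inner_cinner)
  also have "\<dots> \<le> cmod (cinner u v)" by (rule complex_Re_le_cmod)
  also have "cinner u v = z * cnj w * cinner (T x) (adj T x)"
    by (simp add: u_def v_def cinner_scaleC_left cinner_scaleC_right)
  also have "cinner (T x) (adj T x) = cinner ((T \<circ> T) x) x"
    by (simp add: adj_prop[OF T])
  also have "cmod (z * cnj w * cinner ((T \<circ> T) x) x) = p * q * cmod (cinner ((T \<circ> T) x) x)"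
    by (simp add: norm_mult p_def q_def)
  also have "\<dots> \<le> p * q * (W * n\<^sup>2)"
    using numrad_le[OF blTT, of x] pq by (intro mult_left_mono) (simp_all add: W_def n_def)
  finally have iuv: "inner u v \<le> p * q * (W * n\<^sup>2)" .
  have "(norm (u + v))\<^sup>2 = (norm u)\<^sup>2 + (norm v)\<^sup>2 + 2 * inner u v"
    by (simp add: power2_norm_eq_inner inner_add_left inner_add_right inner_commute)
  also have "\<dots> \<le> p\<^sup>2 * K\<^sup>2 + q\<^sup>2 * K\<^sup>2 + 2 * p * q * (W * n\<^sup>2)"
    using nu nv iuv by simp
  also have "\<dots> \<le> p\<^sup>2 * K\<^sup>2 + q\<^sup>2 * K\<^sup>2 + (p\<^sup>2 + q\<^sup>2) * (W * n\<^sup>2)"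
  proof -
    have "2 * p * q \<le> p\<^sup>2 + q\<^sup>2"
    proof -
      have "0 \<le> (p - q)\<^sup>2" by simp
      then show ?thesis by (simp add: power2_eq_square algebra_simps)
    qed
    then show ?thesis using pq by (simp add: mult_right_mono)
  qed
  also have "\<dots> = (p\<^sup>2 + q\<^sup>2) * (K\<^sup>2 + W * n\<^sup>2)" by (simp add: algebra_simps)
  also have "\<dots> \<le> 1 * (K\<^sup>2 + W * n\<^sup>2)"
    using zw pq by (intro mult_right_mono) (simp_all add: p_def q_def)
  also have "\<dots> = (N\<^sup>2 + W) * n\<^sup>2" by (simp add: K_def power_mult_distrib algebra_simps)
  finally show ?thesis by (simp add: u_def v_def N_def W_def n_def)
qed



lemma sqrt_bound:
  assumes "(n::real)\<^sup>2 \<le> B * m\<^sup>2" "m \<ge> 0"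
  shows "n \<le> sqrt B * m"
proof -
  have "n \<le> sqrt (B * m\<^sup>2)" by (rule real_le_rsqrt[OF assms(1)])
  also have "\<dots> = sqrt B * m" using assms(2) by (simp add: real_sqrt_mult)
  finally show ?thesis .
qed

theorem theorem3p4:
  fixes T :: "'a::complex_hilbert \<Rightarrow> 'a"
  assumes "cblinear T"
  shows "numrad T \<le> sqrt 2 / 2 * dragomir T \<and>
         sqrt 2 / 2 * dragomir T \<le> sqrt 2 / 2 *
           min (sqrt (onorm (\<lambda>x. T (adj T x) + adj T (T x))))
               (sqrt ((onorm T)\<^sup>2 + numrad (T \<circ> T)))"
proof -
  note T = assms
  define B1 where "B1 = onorm (\<lambda>x. T (adj T x) + adj T (T x))"
  define B2 where "B2 = (onorm T)\<^sup>2 + numrad (T \<circ> T)"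
  define P where "P = {(\<zeta>::complex, \<eta>::complex). (cmod \<zeta>)\<^sup>2 + (cmod \<eta>)\<^sup>2 \<le> 1}"
  define F where "F = (\<lambda>p::complex \<times> complex. onorm (\<lambda>x. fst p *\<^sub>C T x + snd p *\<^sub>C adj T x))"
  have drag: "dragomir T = (SUP p\<in>P. F p)" unfolding dragomir_def P_def F_def ..
  have blT: "bounded_linear T" by (rule cblinear_bl[OF T])
  have blTT: "bounded_linear (T \<circ> T)" unfolding comp_def
    by (rule bounded_linear_compose[OF blT blT])
  have B1nn: "B1 \<ge> 0" unfolding B1_def
  proof (rule onorm_pos_le)
    have 1: "bounded_linear (\<lambda>x. T (adj T x))"
      by (rule bounded_linear_compose[OF cblinear_bl[OF T] adj_bl[OF T]])
    have 2: "bounded_linear (\<lambda>x. adj T (T x))"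
      by (rule bounded_linear_compose[OF adj_bl[OF T] cblinear_bl[OF T]])
    show "bounded_linear (\<lambda>x. T (adj T x) + adj T (T x))"
      by (rule bounded_linear_add[OF 1 2])
  qed
  have B2nn: "B2 \<ge> 0" unfolding B2_def using numrad_nonneg[OF blTT] by simp
  have inP: "p \<in> P \<longleftrightarrow> (cmod (fst p))\<^sup>2 + (cmod (snd p))\<^sup>2 \<le> 1" for p
    by (cases p) (simp add: P_def)
  have F1: "F p \<le> sqrt B1" if "p \<in> P" for p
    unfolding F_def
  proof (rule onorm_bound)
    show "0 \<le> sqrt B1" using B1nn by simp
    fix x
    show "norm (fst p *\<^sub>C T x + snd p *\<^sub>C adj T x) \<le> sqrt B1 * norm x"
      using key1[OF T, of "fst p" "snd p" x] that unfolding inP B1_def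
      by (intro sqrt_bound) simp_all
  qed
  have F2: "F p \<le> sqrt B2" if "p \<in> P" for p
    unfolding F_def
  proof (rule onorm_bound)
    show "0 \<le> sqrt B2" using B2nn by simp
    fix x
    show "norm (fst p *\<^sub>C T x + snd p *\<^sub>C adj T x) \<le> sqrt B2 * norm x"
      using key2[OF T, of "fst p" "snd p" x] that unfolding inP B2_def
      by (intro sqrt_bound) simp_all
  qed
  have P0: "(0, 0) \<in> P" by (simp add: P_def)
  have Pne: "P \<noteq> {}" using P0 by blast
  have bdd: "bdd_above (F ` P)" using F1 by (intro bdd_aboveI2) auto
  have Fup: "F p \<le> dragomir T" if "p \<in> P" for p
    unfolding drag by (rule cSUP_upper[OF that bdd])
  have part2: "dragomir T \<le> min (sqrt B1) (sqrt B2)"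
    unfolding drag using F1 F2 by (intro cSUP_least[OF Pne]) simp
  have Fnn: "0 \<le> F p" for p unfolding F_def by (rule onorm_pos_le[OF bl_combo[OF T]])
  have drag0: "0 \<le> dragomir T" using Fup[OF P0] Fnn[of "(0,0)"] by linarith
  define s where "s = sqrt (2::real)"
  have s0: "s > 0" by (simp add: s_def)
  have ss: "s * s = 2" by (simp add: s_def)
  have part1: "numrad T \<le> s / 2 * dragomir T"
    unfolding numrad_def
  proof (rule cSup_least)
    show "{cmod (cinner (T x) x) |x. norm x = 1} \<union> {0} \<noteq> {}" by blast
    fix t assume "t \<in> {cmod (cinner (T x) x) |x. norm x = 1} \<union> {0}"
    then show "t \<le> s / 2 * dragomir T"
    proof
      assume "t \<in> {0}" then show ?thesis using drag0 s0 by simp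
    next
      assume "t \<in> {cmod (cinner (T x) x) |x. norm x = 1}"
      then obtain x where x1: "norm x = 1" and tx: "t = cmod (cinner (T x) x)" by blast
      define c where "c = cinner (T x) x"
      show ?thesis
      proof (cases "c = 0")
        case True then show ?thesis using tx c_def drag0 s0 by simp
      next
        case False
        define u where "u = cnj c / complex_of_real (cmod c)"
        have cu: "cmod u = 1" using False by (simp add: u_def norm_divide)
        have cc: "cnj c * c = complex_of_real (cmod c) * complex_of_real (cmod c)"
          using complex_norm_square[of c] by (simp add: mult.commute power2_eq_square)
        have c0: "complex_of_real (cmod c) \<noteq> 0" using False by simp
        have uc: "u * c = complex_of_real (cmod c)"
          unfolding u_def using cc c0 by (simp add: field_simps)
        have uc2: "cnj u * cnj c = complex_of_real (cmod c)"
          using arg_cong[OF uc, of cnj] by simp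
        define z where "z = u / complex_of_real s"
        define w where "w = cnj u / complex_of_real s"
        have zw: "(cmod z)\<^sup>2 + (cmod w)\<^sup>2 = 1"
          using s0 ss cu by (simp add: z_def w_def norm_divide power_divide power2_eq_square)
        then have zwP: "(z, w) \<in> P" by (simp add: P_def)
        have adjc: "cinner (adj T x) x = cnj c"
          unfolding c_def by (simp only: adj_prop2[OF T] cinner_commute[of x])
        have "cinner (z *\<^sub>C T x + w *\<^sub>C adj T x) x = z * c + w * cnj c"
          by (simp add: cinner_add_left cinner_scaleC_left adjc c_def)
        also have "\<dots> = (u * c + cnj u * cnj c) / complex_of_real s"
          by (simp add: z_def w_def add_divide_distrib)
        also have "\<dots> = complex_of_real (2 * cmod c / s)"
          by (simp add: uc uc2)
        finally have eq: "cinner (z *\<^sub>C T x + w *\<^sub>C adj T x) x = complex_of_real (2 * cmod c / s)" .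
        have "cmod (cinner (z *\<^sub>C T x + w *\<^sub>C adj T x) x) = \<bar>2 * cmod c / s\<bar>"
          by (simp only: eq norm_of_real)
        also have "\<dots> = 2 * cmod c / s" using s0 by simp
        finally have "cmod (cinner (z *\<^sub>C T x + w *\<^sub>C adj T x) x) = 2 * cmod c / s" .
        also have "2 * cmod c / s = s * cmod c" using s0 ss by (simp add: field_simps)
        finally have "s * cmod c \<le> norm (z *\<^sub>C T x + w *\<^sub>C adj T x) * norm x"
          by (metis cinner_cauchy_schwarz)
        also have "\<dots> \<le> F (z, w) * norm x * norm x"
          unfolding F_def fst_conv snd_conv
          by (rule mult_right_mono[OF onorm[OF bl_combo[OF T]] norm_ge_zero])
        also have "\<dots> \<le> dragomir T" using Fup[OF zwP] x1 by simp
        finally have "s * cmod c \<le> dragomir T" .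
        then have "cmod c \<le> dragomir T / s" using s0 by (simp add: field_simps)
        also have "dragomir T / s = s / 2 * dragomir T" using s0 ss by (simp add: field_simps)
        finally show ?thesis using tx c_def by simp
      qed
    qed
  qed
  show ?thesis
    using part1 part2 s0 unfolding s_def B1_def B2_def
    by (simp add: mult_left_mono)
qed


end
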